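(* Let $n\ge 1$, let $C_u(v_1),\ldots,C_u(v_n)>0$ and $R_1,\ldots,R_n>0$ be sustainable, i.e. $R_i\le C_u(v_i)$ for all $i$, $\sum_{j\ne i}R_j\le C_d(v_i)$ for all $i$ (for some downlink capacities $C_d(v_i)>0$), and $(n-1)\sum_{i=1}^n R_i\le\sum_{i=1}^n C_u(v_i)$. Then the output $r_{i,j}$ of the algorithm described in the context satisfies the Valid Partition Constraint: $\sum_{j=1}^n r_{i,j} = R_i$ for every $1\le i\le n$.
   Context: Sub-stream rate assigning algorithm. Input: $n$, uplink capacities $C_u(v_1),\ldots,C_u(v_n)$ and rates $R_1,\ldots,R_n$. Initialize $r_{i,j}:=0$ for all $1\le i,j\le n$ and $U_i := C_u(v_i)-R_i$ for $1\le i\le n$. Outer loop: for $i=1$ to $n$: set $R'_i := R_i$; inner loop: for $j=1$ to $n$: if $(n-2)R'_i > U_j$ then set $r_{i,j} := U_j/(n-2)$, else set $r_{i,j} := R'_i$; then set $U_j := U_j-(n-2)r_{i,j}$ and $R'_i := R'_i - r_{i,j}$; if $R'_i = 0$, exit the inner loop. Output all $r_{i,j}$. *)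

theory Defs
  imports Complex_Main
begin

text \<open>Peers are indexed 1..n.
  The state of the inner loop is (U, R', r): the residual uplink capacities U,
  the still unassigned rate R'_i of the current sub-stream i, and the matrix r.\<close>

type_synonym inner_state = "(nat \<Rightarrow> real) \<times> real \<times> (nat \<Rightarrow> nat \<Rightarrow> real)"

definition inner_step :: "nat \<Rightarrow> nat \<Rightarrow> inner_state \<Rightarrow> nat \<Rightarrow> inner_state" where
  "inner_step n i s j =
     (case s of (U, Rp, r) \<Rightarrow>
        (let x = (if (real n - 2) * Rp > U j then U j / (real n - 2) else Rp)
         in (U(j := U j - (real n - 2) * x), Rp - x, r(i := (r i)(j := x)))))"

fun inner_loop :: "nat \<Rightarrow> nat \<Rightarrow> nat list \<Rightarrow> inner_state \<Rightarrow> inner_state" where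
  "inner_loop n i [] s = s"
| "inner_loop n i (j # js) s =
     (let s' = inner_step n i s j in
      if fst (snd s') = 0 then s' else inner_loop n i js s')"

definition outer_step :: "nat \<Rightarrow> (nat \<Rightarrow> real)
    \<Rightarrow> (nat \<Rightarrow> real) \<times> (nat \<Rightarrow> nat \<Rightarrow> real) \<Rightarrow> nat
    \<Rightarrow> (nat \<Rightarrow> real) \<times> (nat \<Rightarrow> nat \<Rightarrow> real)" where
  "outer_step n R st i =
     (case st of (U, r) \<Rightarrow>
        (case inner_loop n i [1..<n+1] (U, R i, r) of (U', _, r') \<Rightarrow> (U', r')))"

definition assign_rates :: "nat \<Rightarrow> (nat \<Rightarrow> real) \<Rightarrow> (nat \<Rightarrow> real) \<Rightarrow> nat \<Rightarrow> nat \<Rightarrow> real" where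
  "assign_rates n Cu R =
     snd (foldl (outer_step n R) (\<lambda>j. Cu j - R j, \<lambda>_ _. 0) [1..<n+1])"

end

theory Submission
  imports Defs
begin

lemma inner_inv:
  assumes "distinct js" "Rp \<ge> 0" "\<forall>j\<in>set js. U j \<ge> 0" "\<forall>j\<in>set js. r i j = 0"
    "inner_loop n i js (U, Rp, r) = (U', Rp', r')"
  shows "(\<forall>k. k \<noteq> i \<longrightarrow> r' k = r k) \<and> (\<forall>j. j \<notin> set js \<longrightarrow> r' i j = r i j \<and> U' j = U j)
   \<and> (\<forall>j\<in>set js. U' j \<ge> 0) \<and> Rp' \<ge> 0
   \<and> (\<Sum>j\<in>set js. r' i j) + Rp' = Rp
   \<and> (\<Sum>j\<in>set js. U' j) = (\<Sum>j\<in>set js. U j) - (real n - 2) * (Rp - Rp')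
   \<and> (Rp' = 0 \<or> (\<forall>j\<in>set js. U' j = 0) \<and> (js \<noteq> [] \<longrightarrow> real n - 2 > 0))"
  using assms
proof (induction js arbitrary: U Rp r U' Rp' r')
  case Nil
  then show ?case by simp
next
  case (Cons j js)
  define m where "m = real n - 2"
  define x where "x = (if m * Rp > U j then U j / m else Rp)"
  define U1 where "U1 = U(j := U j - m * x)"
  define Rp1 where "Rp1 = Rp - x"
  define r1 where "r1 = r(i := (r i)(j := x))"
  have step: "inner_step n i (U, Rp, r) j = (U1, Rp1, r1)"
    unfolding inner_step_def Let_def U1_def Rp1_def r1_def x_def m_def by simp
  have Uj: "U j \<ge> 0" using Cons.prems by simp
  have jn: "j \<notin> set js" using Cons.prems by simp
  have rij: "r i j = 0" using Cons.prems by simp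
  have xfacts: "x \<ge> 0 \<and> x \<le> Rp \<and> U j - m * x \<ge> 0 \<and> (x = Rp \<or> (m > 0 \<and> U j - m * x = 0))"
  proof (cases "m * Rp > U j")
    case True
    then have "m > 0" using Uj Cons.prems(2)
      by (metis less_eq_real_def linorder_not_le mult_nonpos_nonneg order.strict_trans2)
    then show ?thesis using True Uj unfolding x_def
      by (auto simp: field_simps)
  next
    case False
    then show ?thesis using Cons.prems(2) unfolding x_def by auto
  qed
  have sumr: "(\<Sum>k\<in>set (j#js). f k) = f j + (\<Sum>k\<in>set js. f k)" for f :: "nat \<Rightarrow> real"
    using jn by simp
  show ?case
  proof (cases "Rp1 = 0")
    case True
    then have res: "(U', Rp', r') = (U1, Rp1, r1)" using Cons.prems(5) step by simp
    have s1: "(\<Sum>k\<in>set js. r1 i k) = 0" using Cons.prems(4) jn unfolding r1_def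
      by (intro sum.neutral) auto
    have s2: "(\<Sum>k\<in>set js. U1 k) = (\<Sum>k\<in>set js. U k)" using jn unfolding U1_def
      by (intro sum.cong) auto
    show ?thesis using res True xfacts Cons.prems(3) s1 s2 unfolding sumr
      by (auto simp: U1_def Rp1_def r1_def m_def)
  next
    case False
    then have res: "inner_loop n i js (U1, Rp1, r1) = (U', Rp', r')" using Cons.prems(5) step by simp
    have IH: "(\<forall>k. k \<noteq> i \<longrightarrow> r' k = r1 k) \<and> (\<forall>k. k \<notin> set js \<longrightarrow> r' i k = r1 i k \<and> U' k = U1 k)
   \<and> (\<forall>k\<in>set js. U' k \<ge> 0) \<and> Rp' \<ge> 0
   \<and> (\<Sum>k\<in>set js. r' i k) + Rp' = Rp1
   \<and> (\<Sum>k\<in>set js. U' k) = (\<Sum>k\<in>set js. U1 k) - m * (Rp1 - Rp')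
   \<and> (Rp' = 0 \<or> (\<forall>k\<in>set js. U' k = 0) \<and> (js \<noteq> [] \<longrightarrow> m > 0))"
      unfolding m_def
    proof (rule Cons.IH[OF _ _ _ _ res])
      show "distinct js" using Cons.prems by simp
      show "0 \<le> Rp1" using xfacts Rp1_def by simp
      show "\<forall>k\<in>set js. 0 \<le> U1 k" using Cons.prems(3) jn U1_def by auto
      show "\<forall>k\<in>set js. r1 i k = 0" using Cons.prems(4) jn r1_def by auto
    qed
    have s2: "(\<Sum>k\<in>set js. U1 k) = (\<Sum>k\<in>set js. U k)" using jn unfolding U1_def
      by (intro sum.cong) auto
    have mpos: "m > 0" and Uz: "U j - m * x = 0" using xfacts False Rp1_def by auto
    have rj: "r' i j = x" "U' j = U j - m * x" using IH jn by (auto simp: r1_def U1_def)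
    show ?thesis unfolding sumr
    proof (intro conjI)
      show "\<forall>k. k \<noteq> i \<longrightarrow> r' k = r k" using IH r1_def by auto
      show "\<forall>k. k \<notin> set (j # js) \<longrightarrow> r' i k = r i k \<and> U' k = U k" using IH r1_def U1_def by auto
      show "\<forall>k\<in>set (j # js). 0 \<le> U' k" using IH rj xfacts by auto
      show "0 \<le> Rp'" using IH by simp
      show "r' i j + (\<Sum>k\<in>set js. r' i k) + Rp' = Rp" using IH rj Rp1_def by simp
      show "U' j + sum U' (set js) = U j + sum U (set js) - (real n - 2) * (Rp - Rp')"
        using IH rj s2 Rp1_def m_def by (simp add: algebra_simps)
      show "Rp' = 0 \<or> (\<forall>k\<in>set (j # js). U' k = 0) \<and> (j # js \<noteq> [] \<longrightarrow> 0 < real n - 2)"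
        using IH rj Uz mpos m_def by auto
    qed
  qed
qed


lemma set_upt1: "set [1..<n+1] = {1..n}" by auto

lemma outer_inv:
  fixes n :: nat and Cu R :: "nat \<Rightarrow> real"
  assumes "n \<ge> 1"
    and pos: "\<forall>i\<in>{1..n}. R i > 0"
    and le: "\<forall>i\<in>{1..n}. R i \<le> Cu i"
    and tot: "(real n - 1) * (\<Sum>i=1..n. R i) \<le> (\<Sum>i=1..n. Cu i)"
    and "k \<le> n"
    and "foldl (outer_step n R) (\<lambda>j. Cu j - R j, \<lambda>_ _. 0) [1..<k+1] = (U, r)"
  shows "(\<forall>j\<in>{1..n}. U j \<ge> 0) \<and> (\<Sum>j=1..n. U j) = (\<Sum>i=1..n. Cu i) - (\<Sum>i=1..n. R i) - (real n - 2) * (\<Sum>i=1..k. R i)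
     \<and> (\<forall>i\<in>{1..k}. (\<Sum>j=1..n. r i j) = R i) \<and> (\<forall>i>k. \<forall>j. r i j = 0)"
  using assms(5,6)
proof (induction k arbitrary: U r)
  case 0
  then have "U = (\<lambda>j. Cu j - R j)" "r = (\<lambda>_ _. 0)" by auto
  then show ?case using le by (simp add: sum_subtractf)
next
  case (Suc k)
  define m where "m = real n - 2"
  obtain U0 r0 where f0: "foldl (outer_step n R) (\<lambda>j. Cu j - R j, \<lambda>_ _. 0) [1..<k+1] = (U0, r0)"
    by fastforce
  have I: "(\<forall>j\<in>{1..n}. U0 j \<ge> 0) \<and> (\<Sum>j=1..n. U0 j) = (\<Sum>i=1..n. Cu i) - (\<Sum>i=1..n. R i) - m * (\<Sum>i=1..k. R i)
     \<and> (\<forall>i\<in>{1..k}. (\<Sum>j=1..n. r0 i j) = R i) \<and> (\<forall>i>k. \<forall>j. r0 i j = 0)"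
    using Suc.IH[OF _ f0] Suc.prems(1) m_def by simp
  obtain U' Rp' r' where inl: "inner_loop n (Suc k) [1..<n+1] (U0, R (Suc k), r0) = (U', Rp', r')"
    by (metis prod_cases3)
  have "foldl (outer_step n R) (\<lambda>j. Cu j - R j, \<lambda>_ _. 0) [1..<Suc k+1] = outer_step n R (U0, r0) (Suc k)"
    using f0 by simp
  also have "\<dots> = (U', r')" unfolding outer_step_def using inl by simp
  finally have Ur: "U = U'" "r = r'" using Suc.prems(2) by auto
  have Rk: "R (Suc k) > 0" using pos Suc.prems(1) by simp
  have J: "(\<forall>k'. k' \<noteq> Suc k \<longrightarrow> r' k' = r0 k') \<and> (\<forall>j. j \<notin> {1..n} \<longrightarrow> r' (Suc k) j = r0 (Suc k) j \<and> U' j = U0 j)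
   \<and> (\<forall>j\<in>{1..n}. U' j \<ge> 0) \<and> Rp' \<ge> 0
   \<and> (\<Sum>j\<in>{1..n}. r' (Suc k) j) + Rp' = R (Suc k)
   \<and> (\<Sum>j\<in>{1..n}. U' j) = (\<Sum>j\<in>{1..n}. U0 j) - m * (R (Suc k) - Rp')
   \<and> (Rp' = 0 \<or> (\<forall>j\<in>{1..n}. U' j = 0) \<and> ([1..<n+1] \<noteq> [] \<longrightarrow> m > 0))"
    unfolding m_def set_upt1[symmetric]
    by (rule inner_inv[OF _ _ _ _ inl]) (use I Rk in \<open>auto simp: set_upt1\<close>)
  have sub: "(\<Sum>i=1..Suc k. R i) \<le> (\<Sum>i=1..n. R i)"
    using Suc.prems(1) pos by (intro sum_mono2) (auto simp: less_imp_le)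
  have Rp0: "Rp' = 0"
  proof (rule ccontr)
    assume "Rp' \<noteq> 0"
    then have z: "\<forall>j\<in>{1..n}. U' j = 0" and mp: "m > 0" using J assms(1) by auto
    have "(\<Sum>j\<in>{1..n}. U' j) = 0" using z by simp
    then have e: "m * (R (Suc k) - Rp') = (\<Sum>i=1..n. Cu i) - (\<Sum>i=1..n. R i) - m * (\<Sum>i=1..k. R i)"
      using J I by linarith
    have "(\<Sum>i=1..n. Cu i) - (\<Sum>i=1..n. R i) \<ge> m * (\<Sum>i=1..n. R i)" using tot unfolding m_def by (simp add: algebra_simps)
    moreover have "m * (\<Sum>i=1..Suc k. R i) \<le> m * (\<Sum>i=1..n. R i)" using sub mp by simp
    ultimately have "m * (R (Suc k) - Rp') \<ge> m * R (Suc k)" using e by (simp add: algebra_simps)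
    then have "m * Rp' \<le> 0" by (simp add: algebra_simps)
    then have "Rp' \<le> 0" using mp by (simp add: mult_le_0_iff)
    then show False using J \<open>Rp' \<noteq> 0\<close> by simp
  qed
  show ?case unfolding Ur
  proof (intro conjI)
    show "\<forall>j\<in>{1..n}. 0 \<le> U' j" using J by simp
    show "(\<Sum>j = 1..n. U' j) = (\<Sum>i = 1..n. Cu i) - (\<Sum>i = 1..n. R i) - (real n - 2) * (\<Sum>i = 1..Suc k. R i)"
      using J I Rp0 m_def by (simp add: algebra_simps)
    show "\<forall>i\<in>{1..Suc k}. (\<Sum>j = 1..n. r' i j) = R i"
    proof
      fix i assume "i \<in> {1..Suc k}"
      then consider "i = Suc k" | "i \<in> {1..k}" by fastforce
      then show "(\<Sum>j = 1..n. r' i j) = R i"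
        by cases (use J I Rp0 in auto)
    qed
    show "\<forall>i>Suc k. \<forall>j. r' i j = 0" using J I by auto
  qed
qed

theorem propositionB3:
  fixes n :: nat and Cu Cd R :: "nat \<Rightarrow> real"
  assumes "n \<ge> 1"
    and "\<forall>i\<in>{1..n}. Cu i > 0 \<and> Cd i > 0 \<and> R i > 0"
    and "\<forall>i\<in>{1..n}. R i \<le> Cu i"
    and "\<forall>i\<in>{1..n}. (\<Sum>j\<in>{1..n} - {i}. R j) \<le> Cd i"
    and "(real n - 1) * (\<Sum>i=1..n. R i) \<le> (\<Sum>i=1..n. Cu i)"
  shows "\<forall>i\<in>{1..n}. (\<Sum>j=1..n. assign_rates n Cu R i j) = R i"
proof -
  obtain U r where f: "foldl (outer_step n R) (\<lambda>j. Cu j - R j, \<lambda>_ _. 0) [1..<n+1] = (U, r)"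
    by fastforce
  have "assign_rates n Cu R = r" unfolding assign_rates_def f by simp
  moreover have "\<forall>i\<in>{1..n}. (\<Sum>j=1..n. r i j) = R i"
    using outer_inv[OF assms(1) _ assms(3) assms(5) order_refl f] assms(2) by auto
  ultimately show ?thesis by simp
qed

end
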